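(* Let $G$ be a (possibly infinite) graph and $k$ a positive integer such that $G$ contains no path on $k$ vertices as a subgraph and every vertex of $G$ lies on fewer than $k$ pairwise edge-disjoint cycles. Then, whatever the cat's starting vertex and play, the herder can capture the cat after at most $k^3-2k^2+3k-2$ edge deletions; i.e. $\mathrm{cat}(G)\le k^3-2k^2+3k-2$.
   Context: Cat Herding is played on a simple, possibly infinite graph $G$. The cat first places its token on a vertex. Then the players alternate, the herder moving first: the herder deletes one edge of the current graph, and then, unless the cat's current vertex has degree $0$ in the current graph, the cat moves its token along a finite path with at least one edge in the current graph to a different vertex. The cat is captured when its vertex has degree $0$ in the current graph; the score is the number of edges deleted. $\mathrm{cat}(G)$ denotes the optimal score (herder minimizing, cat maximizing, cat choosing the start). *)

theory Defs
  imports Main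
begin

definition simple_graph :: "'a set \<Rightarrow> 'a set set \<Rightarrow> bool" where
  "simple_graph V E \<longleftrightarrow> (\<forall>e\<in>E. \<exists>x y. x \<noteq> y \<and> x \<in> V \<and> y \<in> V \<and> e = {x, y})"

definition isolated :: "'a set set \<Rightarrow> 'a \<Rightarrow> bool" where
  "isolated E v \<longleftrightarrow> (\<forall>e\<in>E. v \<notin> e)"

definition reach :: "'a set set \<Rightarrow> 'a \<Rightarrow> 'a \<Rightarrow> bool" where
  "reach E v w \<longleftrightarrow> (v, w) \<in> {(x, y). {x, y} \<in> E}\<^sup>*"

text \<open>herder_wins n E v: it is the herder's turn, the current edge set is E, the cat
  sits at v; the herder can force capture using at most n further edge deletions.\<close>
fun herder_wins :: "nat \<Rightarrow> 'a set set \<Rightarrow> 'a \<Rightarrow> bool" where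
  "herder_wins 0 E v \<longleftrightarrow> isolated E v"
| "herder_wins (Suc n) E v \<longleftrightarrow> isolated E v \<or>
     (\<exists>e\<in>E. \<forall>w. w \<noteq> v \<and> reach (E - {e}) v w \<longrightarrow> herder_wins n (E - {e}) w)"

definition has_path :: "'a set set \<Rightarrow> nat \<Rightarrow> bool" where
  "has_path E k \<longleftrightarrow> (\<exists>vs. length vs = k \<and> distinct vs \<and>
      (\<forall>i. Suc i < k \<longrightarrow> {vs ! i, vs ! Suc i} \<in> E))"

definition is_cycle :: "'a set set \<Rightarrow> 'a list \<Rightarrow> bool" where
  "is_cycle E vs \<longleftrightarrow> distinct vs \<and> 3 \<le> length vs \<and>
      (\<forall>i < length vs. {vs ! i, vs ! ((Suc i) mod length vs)} \<in> E)"

definition cycle_edges :: "'a list \<Rightarrow> 'a set set" where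
  "cycle_edges vs = {{vs ! i, vs ! ((Suc i) mod length vs)} | i. i < length vs}"

definition on_disjoint_cycles :: "'a set set \<Rightarrow> 'a \<Rightarrow> nat \<Rightarrow> bool" where
  "on_disjoint_cycles E v k \<longleftrightarrow> (\<exists>cs :: nat \<Rightarrow> 'a list.
      (\<forall>i<k. is_cycle E (cs i) \<and> v \<in> set (cs i)) \<and>
      (\<forall>i<k. \<forall>j<k. i \<noteq> j \<longrightarrow> cycle_edges (cs i) \<inter> cycle_edges (cs j) = {}))"

end

theory Submission
  imports Defs
begin

fun wpath :: "'a set set \<Rightarrow> 'a list \<Rightarrow> bool" where
  "wpath E [] = True"
| "wpath E [x] = True"
| "wpath E (x # y # xs) = ({x, y} \<in> E \<and> wpath E (y # xs))"

definition H :: "'a set set \<Rightarrow> 'a \<Rightarrow> nat \<Rightarrow> bool" where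
  "H E r h \<longleftrightarrow> (\<forall>xs. wpath E (r # xs) \<and> distinct (r # xs) \<longrightarrow> length (r # xs) \<le> h)"

lemma wpath_Cons: "wpath E (x # xs) \<longleftrightarrow> (xs = [] \<or> ({x, hd xs} \<in> E \<and> wpath E xs))"
  by (cases xs) auto

lemma wpath_append:
  "wpath E (xs @ ys) \<longleftrightarrow> wpath E xs \<and> wpath E ys \<and> (xs \<noteq> [] \<and> ys \<noteq> [] \<longrightarrow> {last xs, hd ys} \<in> E)"
proof (induction xs)
  case Nil then show ?case by simp
next
  case (Cons x xs)
  show ?case
    using Cons by (cases xs) (auto simp: wpath_Cons)
qed

lemma wpath_nth: "wpath E xs \<longleftrightarrow> (\<forall>i. Suc i < length xs \<longrightarrow> {xs ! i, xs ! Suc i} \<in> E)"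
proof (induction E xs rule: wpath.induct)
  case (3 E x y xs)
  show ?case
  proof
    assume a: "wpath E (x # y # xs)"
    show "\<forall>i. Suc i < length (x # y # xs) \<longrightarrow> {(x # y # xs) ! i, (x # y # xs) ! Suc i} \<in> E"
    proof (intro allI impI)
      fix i assume "Suc i < length (x # y # xs)"
      then show "{(x # y # xs) ! i, (x # y # xs) ! Suc i} \<in> E"
        using a 3 by (cases i) auto
    qed
  next
    assume a: "\<forall>i. Suc i < length (x # y # xs) \<longrightarrow> {(x # y # xs) ! i, (x # y # xs) ! Suc i} \<in> E"
    have "{x, y} \<in> E" using a[rule_format, of 0] by simp
    moreover have "\<forall>i. Suc i < length (y # xs) \<longrightarrow> {(y # xs) ! i, (y # xs) ! Suc i} \<in> E"
      using a[rule_format, of "Suc _"] by simp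
    ultimately show "wpath E (x # y # xs)" using 3 by simp
  qed
qed auto

lemma wpath_mono: "wpath E xs \<Longrightarrow> E \<subseteq> E' \<Longrightarrow> wpath E' xs"
  by (induction E xs rule: wpath.induct) auto

lemma reach_refl: "reach E v v"
  by (simp add: reach_def)

lemma reach_trans: "reach E a b \<Longrightarrow> reach E b c \<Longrightarrow> reach E a c"
  unfolding reach_def by (rule rtrancl_trans)

lemma reach_mono: "reach E a b \<Longrightarrow> E \<subseteq> E' \<Longrightarrow> reach E' a b"
  unfolding reach_def by (erule rtrancl_mono[THEN subsetD, rotated]) auto

lemma reach_edge: "{a, b} \<in> E \<Longrightarrow> reach E a b"
  unfolding reach_def by auto

lemma reach_sym: "reach E a b \<Longrightarrow> reach E b a"
  unfolding reach_def
proof (induction rule: rtrancl_induct)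
  case base then show ?case by simp
next
  case (step y z)
  then have "(z, y) \<in> {(x, y). {x, y} \<in> E}" by (auto simp: insert_commute)
  from this step.IH show ?case by (rule converse_rtrancl_into_rtrancl)
qed

lemma wpath_reach: "wpath E (x # xs) \<Longrightarrow> a \<in> set xs \<Longrightarrow> reach E x a"
proof (induction xs arbitrary: x)
  case Nil then show ?case by simp
next
  case (Cons y xs)
  then have "{x, y} \<in> E" "wpath E (y # xs)" by auto
  then show ?case using Cons reach_edge reach_trans reach_refl
    by (metis set_ConsD)
qed


lemma simple_path:
  assumes "(a, b) \<in> {(x, y). {x, y} \<in> E \<and> Q x \<and> Q y}\<^sup>*" "Q a"
  shows "\<exists>ps. ps \<noteq> [] \<and> hd ps = a \<and> last ps = b \<and> wpath E ps \<and> distinct ps \<and> (\<forall>x\<in>set ps. Q x)"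
  using assms
proof (induction rule: rtrancl_induct)
  case base
  then show ?case by (intro exI[of _ "[a]"]) auto
next
  case (step b c)
  then obtain ps where ps: "ps \<noteq> []" "hd ps = a" "last ps = b" "wpath E ps" "distinct ps" "\<forall>x\<in>set ps. Q x"
    by blast
  from step have bc: "{b, c} \<in> E" "Q c" by auto
  show ?case
  proof (cases "c \<in> set ps")
    case True
    then obtain us vs where uv: "ps = us @ c # vs" by (meson split_list)
    have "wpath E (us @ [c])" using ps(4) uv wpath_append[of E "us @ [c]" vs] by simp
    moreover have "hd (us @ [c]) = a" using ps(2) uv by (cases us) auto
    moreover have "distinct (us @ [c])" using ps(5) uv by simp
    moreover have "\<forall>x\<in>set (us @ [c]). Q x" using ps(6) uv by auto
    ultimately show ?thesis by (intro exI[of _ "us @ [c]"]) auto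
  next
    case False
    have "wpath E (ps @ [c])" using ps bc by (simp add: wpath_append)
    then show ?thesis using ps bc False by (intro exI[of _ "ps @ [c]"]) auto
  qed
qed

lemma first_step:
  assumes "reach E r y" "y \<noteq> r"
  shows "\<exists>c. c \<noteq> r \<and> {r, c} \<in> E \<and> (c, y) \<in> {(x, z). {x, z} \<in> E \<and> x \<noteq> r \<and> z \<noteq> r}\<^sup>*"
  using assms unfolding reach_def
proof (induction rule: rtrancl_induct)
  case base then show ?case by simp
next
  case (step z y')
  have zy: "{z, y'} \<in> E" using step.hyps(2) by simp
  show ?case
  proof (cases "z = r")
    case True
    then show ?thesis using zy step.prems by (intro exI[of _ y']) simp
  next
    case False
    from step.IH[OF False] obtain c where c: "c \<noteq> r" "{r, c} \<in> E"
      "(c, z) \<in> {(x, z). {x, z} \<in> E \<and> x \<noteq> r \<and> z \<noteq> r}\<^sup>*"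
      by blast
    have "(z, y') \<in> {(x, z). {x, z} \<in> E \<and> x \<noteq> r \<and> z \<noteq> r}" using zy False step.prems by simp
    with c(3) have "(c, y') \<in> {(x, z). {x, z} \<in> E \<and> x \<noteq> r \<and> z \<noteq> r}\<^sup>*"
      by (rule rtrancl.rtrancl_into_rtrancl)
    then show ?thesis using c(1,2) by blast
  qed
qed

lemma first_step_reach:
  assumes "(c, y) \<in> {(x, z). {x, z} \<in> E \<and> x \<noteq> r \<and> z \<noteq> r}\<^sup>*"
  shows "reach (E - {{r, c}}) c y"
proof -
  have "{(x, z). {x, z} \<in> E \<and> x \<noteq> r \<and> z \<noteq> r} \<subseteq> {(x, z). {x, z} \<in> E - {{r, c}}}"
    by (auto simp: doubleton_eq_iff)
  then have "{(x, z). {x, z} \<in> E \<and> x \<noteq> r \<and> z \<noteq> r}\<^sup>* \<subseteq> {(x, z). {x, z} \<in> E - {{r, c}}}\<^sup>*"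
    by (rule rtrancl_mono)
  then show ?thesis using assms unfolding reach_def by blast
qed

definition cycfree :: "'a set set \<Rightarrow> 'a \<Rightarrow> bool" where
  "cycfree E r \<longleftrightarrow> \<not> (\<exists>cy. is_cycle E cy \<and> r \<in> set cy)"

lemma is_cycle_mono: "is_cycle E cy \<Longrightarrow> E \<subseteq> E' \<Longrightarrow> is_cycle E' cy"
  unfolding is_cycle_def by auto

lemma cycfree_mono: "cycfree E r \<Longrightarrow> E' \<subseteq> E \<Longrightarrow> cycfree E' r"
  unfolding cycfree_def using is_cycle_mono by blast

lemma cycle_extract:
  assumes cf: "cycfree E r" and e: "{r, c} \<in> E" and cr: "c \<noteq> r"
    and p: "wpath (E - {{r, c}}) (c # \<pi>)" and d: "distinct (c # \<pi>)"
  shows "r \<notin> set \<pi>"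
proof
  assume "r \<in> set \<pi>"
  then obtain us vs where uv: "\<pi> = us @ r # vs" by (meson split_list)
  let ?cy = "c # us @ [r]"
  have wp: "wpath E ?cy"
    using p uv wpath_append[of "E - {{r, c}}" "c # us @ [r]" vs] wpath_mono by fastforce
  have usne: "us \<noteq> []"
  proof
    assume "us = []"
    then have "{c, r} \<in> E - {{r, c}}" using p uv by simp
    then show False by (simp add: insert_commute)
  qed
  have dist: "distinct ?cy" using d uv by auto
  have len: "3 \<le> length ?cy" using usne by (cases us) auto
  have edges: "\<forall>i < length ?cy. {?cy ! i, ?cy ! (Suc i mod length ?cy)} \<in> E"
  proof (intro allI impI)
    fix i assume i: "i < length ?cy"
    show "{?cy ! i, ?cy ! (Suc i mod length ?cy)} \<in> E"
    proof (cases "Suc i < length ?cy")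
      case True
      then show ?thesis using wp wpath_nth[of E ?cy] by simp
    next
      case False
      then have "i = Suc (length us)" using i by simp
      then have "i = length ?cy - 1" "Suc i mod length ?cy = 0" by simp_all
      then have "?cy ! i = r" "?cy ! (Suc i mod length ?cy) = c"
        by (simp_all add: nth_append)
      then show ?thesis using e by (simp add: insert_commute)
    qed
  qed
  have "is_cycle E ?cy" unfolding is_cycle_def using dist len edges by blast
  then show False using cf unfolding cycfree_def by auto
qed

lemma cycle_len:
  assumes cy: "is_cycle E cy" and r: "r \<in> set cy" and h: "H E r h"
  shows "length cy \<le> h"
proof -
  let ?n = "length cy"
  obtain j where j: "j < ?n" "cy ! j = r" using r by (meson in_set_conv_nth)
  let ?rc = "rotate j cy"
  have ne: "?rc \<noteq> []" using j by auto
  have cne: "cy \<noteq> []" using j by auto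
  have hd: "hd ?rc = r" using j hd_rotate_conv_nth[OF cne, of j] by simp
  have dist: "distinct ?rc" using cy unfolding is_cycle_def by simp
  have wp: "wpath E ?rc"
    unfolding wpath_nth
  proof (intro allI impI)
    fix i assume i: "Suc i < length ?rc"
    let ?t = "(j + i) mod ?n"
    have t: "?t < ?n" using cne by simp
    have "{cy ! ?t, cy ! (Suc ?t mod ?n)} \<in> E" using cy t unfolding is_cycle_def by blast
    moreover have "Suc ?t mod ?n = (j + Suc i) mod ?n" by (simp add: mod_Suc_eq)
    ultimately show "{?rc ! i, ?rc ! Suc i} \<in> E" using i by (simp add: nth_rotate)
  qed
  have "?rc = r # tl ?rc" using ne hd by (metis list.collapse)
  then have "length ?rc \<le> h" using h wp dist unfolding H_def by metis
  then show ?thesis by simp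
qed


lemma odc_mono: "on_disjoint_cycles E r m \<Longrightarrow> E \<subseteq> E' \<Longrightarrow> on_disjoint_cycles E' r m"
  unfolding on_disjoint_cycles_def using is_cycle_mono by blast

lemma odc_down: "on_disjoint_cycles E r m \<Longrightarrow> m' \<le> m \<Longrightarrow> on_disjoint_cycles E r m'"
proof -
  assume a: "on_disjoint_cycles E r m" "m' \<le> m"
  then obtain cs :: "nat \<Rightarrow> 'a list" where cs: "\<forall>i<m. is_cycle E (cs i) \<and> r \<in> set (cs i)"
    "\<forall>i<m. \<forall>j<m. i \<noteq> j \<longrightarrow> cycle_edges (cs i) \<inter> cycle_edges (cs j) = {}"
    unfolding on_disjoint_cycles_def by blast
  have "\<forall>i<m'. is_cycle E (cs i) \<and> r \<in> set (cs i)" using cs(1) a(2) by simp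
  moreover have "\<forall>i<m'. \<forall>j<m'. i \<noteq> j \<longrightarrow> cycle_edges (cs i) \<inter> cycle_edges (cs j) = {}"
    using cs(2) a(2) by simp
  ultimately show ?thesis unfolding on_disjoint_cycles_def by blast
qed

lemma cycle_edges_sub: "is_cycle E cy \<Longrightarrow> cycle_edges cy \<subseteq> E"
  unfolding is_cycle_def cycle_edges_def by auto

lemma cycle_edges_img: "cycle_edges cy = (\<lambda>i. {cy ! i, cy ! (Suc i mod length cy)}) ` {..<length cy}"
  unfolding cycle_edges_def by auto

lemma card_cycle_edges: "card (cycle_edges cy) \<le> length cy"
  unfolding cycle_edges_img by (metis card_image_le card_lessThan finite_lessThan)

lemma finite_cycle_edges: "finite (cycle_edges cy)"
  unfolding cycle_edges_img by simp

lemma family: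
  assumes nk: "\<not> on_disjoint_cycles E r k" and h: "H E r h" and hk: "h < k"
  shows "\<exists>F. finite F \<and> card F \<le> (k - 1) * (k - 1) \<and> (\<forall>E'. E' \<subseteq> E \<longrightarrow> E' \<inter> F = {} \<longrightarrow> cycfree E' r)"
proof -
  let ?S = "{m. on_disjoint_cycles E r m}"
  have sub: "?S \<subseteq> {..<k}"
  proof
    fix m assume "m \<in> ?S"
    then have "on_disjoint_cycles E r m" by simp
    then show "m \<in> {..<k}" using nk odc_down[of E r m k] by (cases "k \<le> m") auto
  qed
  have z: "0 \<in> ?S" by (simp add: on_disjoint_cycles_def)
  have fin: "finite ?S" using sub finite_subset by blast
  define m where "m = Max ?S"
  have mS: "m \<in> ?S" unfolding m_def using Max_in[OF fin] z by blast
  have mk: "m < k" using mS sub by auto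
  obtain cs :: "nat \<Rightarrow> 'a list" where cs: "\<forall>i<m. is_cycle E (cs i) \<and> r \<in> set (cs i)"
    "\<forall>i<m. \<forall>j<m. i \<noteq> j \<longrightarrow> cycle_edges (cs i) \<inter> cycle_edges (cs j) = {}"
    using mS unfolding on_disjoint_cycles_def by blast
  define F where "F = (\<Union>i\<in>{..<m}. cycle_edges (cs i))"
  have finF: "finite F" unfolding F_def using finite_cycle_edges by blast
  have c1: "card F \<le> (\<Sum>i\<in>{..<m}. card (cycle_edges (cs i)))"
    unfolding F_def by (rule card_UN_le[of "{..<m}" "\<lambda>i. cycle_edges (cs i)", OF finite_lessThan])
  have c2: "(\<Sum>i\<in>{..<m}. card (cycle_edges (cs i))) \<le> (\<Sum>i\<in>{..<m}. h)"
  proof (rule sum_mono)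
    fix i assume "i \<in> {..<m}"
    then have "is_cycle E (cs i)" "r \<in> set (cs i)" using cs(1) by auto
    then have "length (cs i) \<le> h" using cycle_len h by metis
    then show "card (cycle_edges (cs i)) \<le> h" by (rule le_trans[OF card_cycle_edges])
  qed
  have c3: "(\<Sum>i\<in>{..<m}. h) \<le> (k - 1) * (k - 1)"
  proof -
    have "(\<Sum>i\<in>{..<m}. h) = m * h" by simp
    moreover have "m * h \<le> (k - 1) * (k - 1)" using mk hk by (intro mult_le_mono) auto
    ultimately show ?thesis by simp
  qed
  have cardF: "card F \<le> (k - 1) * (k - 1)" using c1 c2 c3 by linarith
  have cf: "\<forall>E'. E' \<subseteq> E \<longrightarrow> E' \<inter> F = {} \<longrightarrow> cycfree E' r"
  proof (intro allI impI)
    fix E' assume E': "E' \<subseteq> E" "E' \<inter> F = {}"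
    show "cycfree E' r"
      unfolding cycfree_def
    proof
      assume "\<exists>cy. is_cycle E' cy \<and> r \<in> set cy"
      then obtain cy where cy: "is_cycle E' cy" "r \<in> set cy" by blast
      define cs' where "cs' = cs(m := cy)"
      have c1: "\<forall>i<Suc m. is_cycle E (cs' i) \<and> r \<in> set (cs' i)"
        using cs(1) cy E'(1) is_cycle_mono unfolding cs'_def by (auto simp: less_Suc_eq)
      have ceF: "\<And>j. j < m \<Longrightarrow> cycle_edges (cs j) \<subseteq> F" unfolding F_def by blast
      have ceE: "cycle_edges cy \<subseteq> E'" using cy(1) by (rule cycle_edges_sub)
      have c2: "\<forall>i<Suc m. \<forall>j<Suc m. i \<noteq> j \<longrightarrow> cycle_edges (cs' i) \<inter> cycle_edges (cs' j) = {}"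
      proof (intro allI impI)
        fix i j assume ij: "i < Suc m" "j < Suc m" "i \<noteq> j"
        show "cycle_edges (cs' i) \<inter> cycle_edges (cs' j) = {}"
        proof (cases "i = m")
          case True
          then have "j < m" using ij by auto
          then show ?thesis using True ceF ceE E'(2) unfolding cs'_def by auto
        next
          case False
          note iF = False
          show ?thesis
          proof (cases "j = m")
            case True
            then have "i < m" using ij iF by auto
            then show ?thesis using True ceF[of i] ceE E'(2) unfolding cs'_def by auto
          next
            case False
            then show ?thesis using iF ij cs(2) unfolding cs'_def by auto
          qed
        qed
      qed
      have "on_disjoint_cycles E r (Suc m)" unfolding on_disjoint_cycles_def using c1 c2 by blast
      then have "Suc m \<le> m" unfolding m_def using fin by (simp add: Max_ge)
      then show False by simp
    qed
  qed
  show ?thesis using finF cardF cf by blast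
qed

lemma first_entry:
  assumes sub: "E \<subseteq> E0" and rv: "reach E0 r v" and nr: "\<not> reach E v r" and h: "H E0 r h"
  shows "\<exists>z. reach E v z \<and> H E z (h - 1)"
proof -
  define D where "D = {x. reach E v x}"
  define Ra where "Ra = {(x, y). {x, y} \<in> E0 \<and> x \<notin> D \<and> y \<notin> D}"
  have rD: "r \<notin> D" using nr unfolding D_def by simp
  have notD: "y \<notin> D" if "(r, y) \<in> Ra\<^sup>*" for y
    using that
  proof (induction rule: rtrancl_induct)
    case base then show ?case using rD by simp
  next
    case (step y z) then show ?case unfolding Ra_def by simp
  qed
  have claim: "(r, y) \<in> Ra\<^sup>* \<or> (\<exists>x z. (r, x) \<in> Ra\<^sup>* \<and> {x, z} \<in> E0 \<and> z \<in> D)"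
    if "(r, y) \<in> {(x, y). {x, y} \<in> E0}\<^sup>*" for y
    using that
  proof (induction rule: rtrancl_induct)
    case base then show ?case by simp
  next
    case (step y y')
    have e: "{y, y'} \<in> E0" using step.hyps(2) by simp
    show ?case
    proof (cases "(r, y) \<in> Ra\<^sup>*")
      case True
      then have yD: "y \<notin> D" by (rule notD)
      show ?thesis
      proof (cases "y' \<in> D")
        case True
        then show ?thesis using e \<open>(r, y) \<in> Ra\<^sup>*\<close> by blast
      next
        case False
        then have "(y, y') \<in> Ra" unfolding Ra_def using e yD by simp
        then show ?thesis using \<open>(r, y) \<in> Ra\<^sup>*\<close> by (meson rtrancl.rtrancl_into_rtrancl)
      qed
    next
      case False
      then show ?thesis using step.IH by blast
    qed
  qed
  have vD: "v \<in> D" unfolding D_def by (simp add: reach_refl)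
  have "(r, v) \<in> {(x, y). {x, y} \<in> E0}\<^sup>*" using rv unfolding reach_def .
  then obtain x z where xz: "(r, x) \<in> Ra\<^sup>*" "{x, z} \<in> E0" "z \<in> D"
    using claim notD vD by blast
  have "(r, x) \<in> {(x, y). {x, y} \<in> E0 \<and> (\<lambda>a. a \<notin> D) x \<and> (\<lambda>a. a \<notin> D) y}\<^sup>*"
    using xz(1) unfolding Ra_def by simp
  then obtain ps where ps: "ps \<noteq> []" "hd ps = r" "last ps = x" "wpath E0 ps" "distinct ps"
    "\<forall>y\<in>set ps. y \<notin> D"
    using simple_path[of r x E0 "\<lambda>a. a \<notin> D"] rD by blast
  have zr: "reach E v z" using xz(3) unfolding D_def by simp
  have "H E z (h - 1)"
    unfolding H_def
  proof (intro allI impI)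
    fix \<pi> assume a: "wpath E (z # \<pi>) \<and> distinct (z # \<pi>)"
    have inD: "set (z # \<pi>) \<subseteq> D"
    proof
      fix y assume y: "y \<in> set (z # \<pi>)"
      show "y \<in> D"
      proof (cases "y = z")
        case True then show ?thesis using xz(3) by simp
      next
        case False
        then have "y \<in> set \<pi>" using y by simp
        then have "reach E z y" using a wpath_reach by metis
        then have "reach E v y" using zr reach_trans by metis
        then show ?thesis unfolding D_def by simp
      qed
    qed
    have wp: "wpath E0 (ps @ z # \<pi>)"
      using ps a xz(2) wpath_mono[OF _ sub] by (simp add: wpath_append)
    have ds: "distinct (ps @ z # \<pi>)" using ps(5,6) a inD by auto
    have "ps @ z # \<pi> = r # (tl ps @ z # \<pi>)" using ps(1,2) by (cases ps) auto
    then have "length (ps @ z # \<pi>) \<le> h" using h wp ds unfolding H_def by metis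
    then show "length (z # \<pi>) \<le> h - 1" using ps(1) by (cases ps) auto
  qed
  then show ?thesis using zr by blast
qed


lemma hw_Suc: "herder_wins n E v \<Longrightarrow> herder_wins (Suc n) E v"
proof (induction n arbitrary: E v)
  case 0
  then show ?case by simp
next
  case (Suc n)
  from Suc.prems have "isolated E v \<or> (\<exists>e\<in>E. \<forall>w. w \<noteq> v \<and> reach (E - {e}) v w \<longrightarrow> herder_wins n (E - {e}) w)"
    by simp
  then show ?case
  proof
    assume "isolated E v" then show ?thesis by simp
  next
    assume "\<exists>e\<in>E. \<forall>w. w \<noteq> v \<and> reach (E - {e}) v w \<longrightarrow> herder_wins n (E - {e}) w"
    then obtain e where "e \<in> E" "\<forall>w. w \<noteq> v \<and> reach (E - {e}) v w \<longrightarrow> herder_wins n (E - {e}) w"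
      by blast
    then have "\<forall>w. w \<noteq> v \<and> reach (E - {e}) v w \<longrightarrow> herder_wins (Suc n) (E - {e}) w"
      using Suc.IH by blast
    then show ?thesis using \<open>e \<in> E\<close> by (simp only: herder_wins.simps) blast
  qed
qed

lemma hw_mono: "herder_wins n E v \<Longrightarrow> n \<le> m \<Longrightarrow> herder_wins m E v"
proof -
  assume a: "herder_wins n E v" "n \<le> m"
  obtain d where d: "m = n + d" using a(2) le_Suc_ex by blast
  have "herder_wins (n + d) E v" for d
  proof (induction d)
    case 0 then show ?case using a(1) by simp
  next
    case (Suc d) from hw_Suc[OF Suc.IH] show ?case by simp
  qed
  then show ?thesis using d by simp
qed

lemma H_mono: "H E r h \<Longrightarrow> E' \<subseteq> E \<Longrightarrow> H E' r h"
  unfolding H_def by (meson wpath_mono)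

lemma H_pos: "H E r h \<Longrightarrow> 1 \<le> h"
  unfolding H_def by (erule allE[of _ "[]"]) simp

lemma eg1:
  assumes cf: "cycfree E r" and ry: "reach E r y" and yr: "y \<noteq> r" and h: "H E r (Suc h')"
    and IH: "\<And>E' w \<rho>. E' \<subseteq> E \<Longrightarrow> reach E' w \<rho> \<Longrightarrow> H E' \<rho> h' \<Longrightarrow> herder_wins N E' w"
  shows "herder_wins (Suc N) E y"
proof -
  obtain c where c: "c \<noteq> r" "{r, c} \<in> E"
    "(c, y) \<in> {(x, z). {x, z} \<in> E \<and> x \<noteq> r \<and> z \<noteq> r}\<^sup>*"
    using first_step[OF ry yr] by blast
  define e where "e = {r, c}"
  have rc: "reach (E - {e}) c y" unfolding e_def using c(3) by (rule first_step_reach)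
  have Hc: "H (E - {e}) c h'"
    unfolding H_def
  proof (intro allI impI)
    fix \<pi> assume a: "wpath (E - {e}) (c # \<pi>) \<and> distinct (c # \<pi>)"
    have rn: "r \<notin> set \<pi>"
      using cycle_extract[OF cf c(2) c(1)] a unfolding e_def by blast
    have "wpath E (c # \<pi>)" using a wpath_mono[of "E - {e}" "c # \<pi>" E] by blast
    then have "wpath E (r # c # \<pi>)" using c(2) by simp
    moreover have "distinct (r # c # \<pi>)" using a rn c(1) by auto
    ultimately have "length (r # c # \<pi>) \<le> Suc h'" using h unfolding H_def by (meson list.discI)
    then show "length (c # \<pi>) \<le> h'" by simp
  qed
  have "\<forall>w. w \<noteq> y \<and> reach (E - {e}) y w \<longrightarrow> herder_wins N (E - {e}) w"
  proof (intro allI impI)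
    fix w assume "w \<noteq> y \<and> reach (E - {e}) y w"
    then have "reach (E - {e}) c w" using rc reach_trans by metis
    then have "reach (E - {e}) w c" by (rule reach_sym)
    then show "herder_wins N (E - {e}) w" using Hc by (intro IH[of "E - {e}" w c]) auto
  qed
  moreover have "e \<in> E" unfolding e_def using c(2) .
  ultimately show ?thesis by (simp only: herder_wins.simps) blast
qed

lemma eg2:
  assumes cf: "cycfree E r" and h: "H E r (Suc h')"
    and IH: "\<And>E' w \<rho>. E' \<subseteq> E \<Longrightarrow> reach E' w \<rho> \<Longrightarrow> H E' \<rho> h' \<Longrightarrow> herder_wins N E' w"
  shows "herder_wins (Suc (Suc N)) E r"
proof (cases "isolated E r")
  case True then show ?thesis by simp
next
  case False
  then have "\<exists>e\<in>E. r \<in> e" unfolding isolated_def by simp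
  then obtain e where e: "e \<in> E" by (elim bexE)
  have "\<forall>w. w \<noteq> r \<and> reach (E - {e}) r w \<longrightarrow> herder_wins (Suc N) (E - {e}) w"
  proof (intro allI impI)
    fix w assume w: "w \<noteq> r \<and> reach (E - {e}) r w"
    have cf': "cycfree (E - {e}) r" using cf Diff_subset by (rule cycfree_mono)
    have h': "H (E - {e}) r (Suc h')" using h Diff_subset by (rule H_mono)
    have IH': "herder_wins N E' w" if "E' \<subseteq> E - {e}" "reach E' w \<rho>" "H E' \<rho> h'" for E' w \<rho>
      using that by (intro IH[of E' w \<rho>]) auto
    show "herder_wins (Suc N) (E - {e}) w"
      using w by (intro eg1[OF cf' _ _ h' IH']) auto
  qed
  then show ?thesis using e by (simp only: herder_wins.simps) blast
qed


lemma phase_AB: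
  assumes cfF: "\<forall>E'. E' \<subseteq> E0 \<longrightarrow> E' \<inter> F = {} \<longrightarrow> cycfree E' r"
    and h: "H E0 r (Suc h')"
    and IHo: "\<forall>E' w \<rho>. E' \<subseteq> E0 \<longrightarrow> reach E' w \<rho> \<longrightarrow> H E' \<rho> h' \<longrightarrow> herder_wins N E' w"
    and sub: "E \<subseteq> E0" and rv: "reach E0 r v"
    and nc: "\<not> (reach E v r \<and> F \<inter> E \<noteq> {})"
  shows "herder_wins (Suc (Suc N)) E v"
proof -
  note IH = IHo[rule_format]
  show ?thesis
proof (cases "reach E v r")
  case False
  obtain z where z: "reach E v z" "H E z (Suc h' - 1)"
    using first_entry[OF sub rv False h] by blast
  have "herder_wins N E v" using z sub by (intro IH[of E v z]) auto
  then show ?thesis using hw_mono by (metis le_add2 plus_1_eq_Suc add_Suc_right)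
next
  case True
  then have FE: "E \<inter> F = {}" using nc by blast
  have cf: "cycfree E r" using cfF sub FE by blast
  have hE: "H E r (Suc h')" using h sub by (rule H_mono)
  have IHE: "herder_wins N E' w" if "E' \<subseteq> E" "reach E' w \<rho>" "H E' \<rho> h'" for E' w \<rho>
    using that sub by (intro IH[of E' w \<rho>]) auto
  show ?thesis
  proof (cases "v = r")
    case True
    then show ?thesis using eg2[OF cf hE IHE] by simp
  next
    case False
    have "reach E r v" using \<open>reach E v r\<close> by (rule reach_sym)
    then have "herder_wins (Suc N) E v" using False by (intro eg1[OF cf _ _ hE IHE])
    then show ?thesis by (rule hw_Suc)
  qed
qed
qed

lemma phase:
  assumes finF: "finite F" and cfF: "\<forall>E'. E' \<subseteq> E0 \<longrightarrow> E' \<inter> F = {} \<longrightarrow> cycfree E' r"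
    and h: "H E0 r (Suc h')"
    and IHo: "\<forall>E' w \<rho>. E' \<subseteq> E0 \<longrightarrow> reach E' w \<rho> \<longrightarrow> H E' \<rho> h' \<longrightarrow> herder_wins N E' w"
  shows "E \<subseteq> E0 \<Longrightarrow> reach E0 r v \<Longrightarrow> card (F \<inter> E) \<le> n \<Longrightarrow> herder_wins (n + Suc (Suc N)) E v"
proof (induction n arbitrary: E v)
  case 0
  have "F \<inter> E = {}" using 0 finF by simp
  then have "herder_wins (Suc (Suc N)) E v" using phase_AB[OF cfF h IHo 0(1,2)] by blast
  then show ?case by simp
next
  case (Suc n)
  show ?case
  proof (cases "reach E v r \<and> F \<inter> E \<noteq> {}")
    case False
    then have "herder_wins (Suc (Suc N)) E v" using phase_AB[OF cfF h IHo Suc.prems(1,2)] by blast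
    then show ?thesis by (rule hw_mono) simp
  next
    case True
    then obtain e where e: "e \<in> F" "e \<in> E" by blast
    have "\<forall>w. w \<noteq> v \<and> reach (E - {e}) v w \<longrightarrow> herder_wins (n + Suc (Suc N)) (E - {e}) w"
    proof (intro allI impI)
      fix w assume w: "w \<noteq> v \<and> reach (E - {e}) v w"
      have s1: "E - {e} \<subseteq> E0" using Suc.prems(1) by blast
      have "reach E0 v w" using w s1 reach_mono by metis
      then have s2: "reach E0 r w" using Suc.prems(2) reach_trans by metis
      have "F \<inter> (E - {e}) = (F \<inter> E) - {e}" by blast
      then have "card (F \<inter> (E - {e})) = card (F \<inter> E) - 1" using e finF by simp
      then have s3: "card (F \<inter> (E - {e})) \<le> n" using Suc.prems(3) by simp
      show "herder_wins (n + Suc (Suc N)) (E - {e}) w" using Suc.IH[OF s1 s2 s3] .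
    qed
    then show ?thesis using e(2) by (simp only: herder_wins.simps add_Suc) blast
  qed
qed

lemma main_lemma:
  assumes cyc: "\<forall>x. \<not> on_disjoint_cycles Eo x k"
  shows "h < k \<Longrightarrow> E \<subseteq> Eo \<Longrightarrow> reach E v r \<Longrightarrow> H E r h \<Longrightarrow> herder_wins (h * ((k - 1) * (k - 1) + 2)) E v"
proof (induction h arbitrary: E v r)
  case 0
  from H_pos[OF 0(4)] show ?case by simp
next
  case (Suc h)
  have nk: "\<not> on_disjoint_cycles E r k"
  proof
    assume "on_disjoint_cycles E r k"
    then have "on_disjoint_cycles Eo r k" using Suc.prems(2) by (rule odc_mono)
    then show False using cyc by simp
  qed
  obtain F where F: "finite F" "card F \<le> (k - 1) * (k - 1)"
    "\<forall>E'. E' \<subseteq> E \<longrightarrow> E' \<inter> F = {} \<longrightarrow> cycfree E' r"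
    using family[OF nk Suc.prems(4,1)] by blast
  have IH': "herder_wins (h * ((k - 1) * (k - 1) + 2)) E' w"
    if "E' \<subseteq> E" "reach E' w \<rho>" "H E' \<rho> h" for E' w \<rho>
    using that Suc.prems(1,2) by (intro Suc.IH[of E' w \<rho>]) auto
  have IHo: "\<forall>E' w \<rho>. E' \<subseteq> E \<longrightarrow> reach E' w \<rho> \<longrightarrow> H E' \<rho> h \<longrightarrow> herder_wins (h * ((k - 1) * (k - 1) + 2)) E' w"
    using IH' by blast
  have rv: "reach E r v" using Suc.prems(3) by (rule reach_sym)
  have cF: "card (F \<inter> E) \<le> card F" using F(1) by (simp add: card_mono)
  have "herder_wins (card F + Suc (Suc (h * ((k - 1) * (k - 1) + 2)))) E v"
    using phase[OF F(1) F(3) Suc.prems(4) IHo _ rv cF] by blast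
  then show ?case by (rule hw_mono) (use F(2) in simp)
qed

lemma arith_bound:
  assumes "1 \<le> k"
  shows "(k - 1) * ((k - 1) * (k - 1) + 2) \<le> nat (int k ^ 3 - 2 * int k ^ 2 + 3 * int k - 2)"
proof -
  obtain j where k: "k = Suc j" using assms by (cases k) auto
  have eq: "int k ^ 3 - 2 * int k ^ 2 + 3 * int k - 2 = int (j * (j * j + 2) + j * j)"
    unfolding k by (simp add: algebra_simps power2_eq_square power3_eq_cube)
  have "nat (int k ^ 3 - 2 * int k ^ 2 + 3 * int k - 2) = j * (j * j + 2) + j * j"
    unfolding eq by (rule nat_int)
  moreover have "k - 1 = j" using k by simp
  ultimately show ?thesis by simp
qed

theorem mainTheorem18:
  fixes V :: "'a set" and E :: "'a set set" and k :: nat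
  assumes "simple_graph V E"
    and "k \<ge> 1"
    and "\<not> has_path E k"
    and "\<forall>v\<in>V. \<not> on_disjoint_cycles E v k"
  shows "\<forall>v\<in>V. herder_wins (nat (int k ^ 3 - 2 * int k ^ 2 + 3 * int k - 2)) E v"
proof
  fix v assume vV: "v \<in> V"
  have cyc: "\<forall>x. \<not> on_disjoint_cycles E x k"
  proof
    fix x
    show "\<not> on_disjoint_cycles E x k"
    proof
      assume od: "on_disjoint_cycles E x k"
      then obtain cy where cy: "is_cycle E cy" "x \<in> set cy"
        using assms(2) unfolding on_disjoint_cycles_def by (meson less_le_trans zero_less_one)
      obtain i where i: "i < length cy" "cy ! i = x" using cy(2) by (meson in_set_conv_nth)
      have "{cy ! i, cy ! (Suc i mod length cy)} \<in> E" using cy(1) i(1) unfolding is_cycle_def by blast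
      then obtain a b where "a \<noteq> b" "a \<in> V" "b \<in> V" "{cy ! i, cy ! (Suc i mod length cy)} = {a, b}"
        using assms(1) unfolding simple_graph_def by meson
      then have "x \<in> V" using i(2) by (metis insertCI insertE singletonD)
      then show False using od assms(4) by blast
    qed
  qed
  have Hv: "H E v (k - 1)"
    unfolding H_def
  proof (intro allI impI)
    fix xs assume a: "wpath E (v # xs) \<and> distinct (v # xs)"
    show "length (v # xs) \<le> k - 1"
    proof (rule ccontr)
      assume "\<not> length (v # xs) \<le> k - 1"
      then have len: "k \<le> length (v # xs)" by simp
      let ?vs = "take k (v # xs)"
      have "length ?vs = k" using len by simp
      moreover have "distinct ?vs" using a by simp
      moreover have "\<forall>i. Suc i < k \<longrightarrow> {?vs ! i, ?vs ! Suc i} \<in> E"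
      proof (intro allI impI)
        fix i assume i: "Suc i < k"
        have "{(v # xs) ! i, (v # xs) ! Suc i} \<in> E"
          using a i len wpath_nth[of E "v # xs"] by simp
        then show "{?vs ! i, ?vs ! Suc i} \<in> E" using i by simp
      qed
      ultimately have "has_path E k" unfolding has_path_def by blast
      then show False using assms(3) by simp
    qed
  qed
  have "herder_wins ((k - 1) * ((k - 1) * (k - 1) + 2)) E v"
    using main_lemma[OF cyc, of "k - 1" E v v] assms(2) Hv by (simp add: reach_refl)
  then show "herder_wins (nat (int k ^ 3 - 2 * int k ^ 2 + 3 * int k - 2)) E v"
    using arith_bound[OF assms(2)] by (rule hw_mono)
qed

end
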